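(* For every $n\ge 1$, $\chi_{lc}(K_n)=n$.
   Context: Graphs are finite, loopless, with symmetric edge sets; $K_c$ is the complete graph on $c$ vertices; write $v\sim w$ when $(v,w)$ is an edge. For graphs $G,H$, the locally commuting algebra $\mathcal A_{lc}(G,H)$ is the unital complex algebra generated by elements $e_{v,x}$ ($v\in V(G)$, $x\in V(H)$) subject to the relations: $\sum_{x\in V(H)}e_{v,x}=1$ for all $v$; $e_{v,x}^2=e_{v,x}$; $e_{v,x}e_{v,y}=0$ for $x\neq y$; $e_{v,x}e_{w,y}=0$ whenever $v\sim w$ and $x\not\sim y$ (in particular when $x=y$); and $e_{v,x}e_{w,y}=e_{w,y}e_{v,x}$ whenever $v\sim w$. (Equivalently it is the quotient of the group $*$-algebra of the free product of $|V(G)|$ cyclic groups of order $|V(H)|$ by the ideal generated by the products of spectral projections forbidden by the graph homomorphism game together with the commutators $[e_{v,x},e_{w,y}]$ for $v\sim w$.) Define $\chi_{lc}(G)=\min\{c:\mathcal A_{lc}(G,K_c)\neq 0\}$. *)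

theory Defs
  imports Complex_Main
begin

text \<open>Free unital complex algebra on generators of type 'g: elements are (finitely supported)
  functions from words (lists of generators) to complex coefficients; a word w is the monomial w.\<close>

type_synonym 'g fa = "'g list \<Rightarrow> complex"

definition fa_mono :: "'g list \<Rightarrow> 'g fa" where
  "fa_mono w = (\<lambda>u. if u = w then 1 else 0)"

definition fa_one :: "'g fa" where
  "fa_one = fa_mono []"

definition fa_gen :: "'g \<Rightarrow> 'g fa" where
  "fa_gen g = fa_mono [g]"

definition fa_mult :: "'g fa \<Rightarrow> 'g fa \<Rightarrow> 'g fa" where
  "fa_mult p q = (\<lambda>u. \<Sum>i\<le>length u. p (take i u) * q (drop i u))"

definition fa_diff :: "'g fa \<Rightarrow> 'g fa \<Rightarrow> 'g fa" where
  "fa_diff p q = (\<lambda>u. p u - q u)"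

inductive_set fa_ideal :: "'g set \<Rightarrow> 'g fa set \<Rightarrow> 'g fa set" for Gens R where
  zero: "(\<lambda>u. 0) \<in> fa_ideal Gens R"
| gen: "\<lbrakk>r \<in> R; a \<in> lists Gens; b \<in> lists Gens\<rbrakk> \<Longrightarrow>
          fa_mult (fa_mult (fa_mono a) r) (fa_mono b) \<in> fa_ideal Gens R"
| add: "\<lbrakk>p \<in> fa_ideal Gens R; q \<in> fa_ideal Gens R\<rbrakk> \<Longrightarrow> (\<lambda>u. p u + q u) \<in> fa_ideal Gens R"
| smult: "p \<in> fa_ideal Gens R \<Longrightarrow> (\<lambda>u. c * p u) \<in> fa_ideal Gens R"

text \<open>A graph is a pair (V, E): finite vertex set V and an edge relation E (symmetric, loopless).\<close>

definition lc_relations ::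
  "'v set \<Rightarrow> ('v \<Rightarrow> 'v \<Rightarrow> bool) \<Rightarrow> 'x set \<Rightarrow> ('x \<Rightarrow> 'x \<Rightarrow> bool) \<Rightarrow> ('v \<times> 'x) fa set" where
  "lc_relations V E W F =
     {fa_diff (\<lambda>u. \<Sum>x\<in>W. fa_gen (v, x) u) fa_one | v. v \<in> V}
   \<union> {fa_diff (fa_mult (fa_gen (v, x)) (fa_gen (v, x))) (fa_gen (v, x)) | v x. v \<in> V \<and> x \<in> W}
   \<union> {fa_mult (fa_gen (v, x)) (fa_gen (v, y)) | v x y. v \<in> V \<and> x \<in> W \<and> y \<in> W \<and> x \<noteq> y}
   \<union> {fa_mult (fa_gen (v, x)) (fa_gen (w, y)) | v w x y.
        v \<in> V \<and> w \<in> V \<and> x \<in> W \<and> y \<in> W \<and> E v w \<and> \<not> F x y}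
   \<union> {fa_diff (fa_mult (fa_gen (v, x)) (fa_gen (w, y))) (fa_mult (fa_gen (w, y)) (fa_gen (v, x))) | v w x y.
        v \<in> V \<and> w \<in> V \<and> x \<in> W \<and> y \<in> W \<and> E v w}"

definition lc_algebra_nonzero ::
  "'v set \<Rightarrow> ('v \<Rightarrow> 'v \<Rightarrow> bool) \<Rightarrow> 'x set \<Rightarrow> ('x \<Rightarrow> 'x \<Rightarrow> bool) \<Rightarrow> bool" where
  "lc_algebra_nonzero V E W F \<longleftrightarrow> fa_one \<notin> fa_ideal (V \<times> W) (lc_relations V E W F)"

definition K_verts :: "nat \<Rightarrow> nat set" where "K_verts c = {0..<c}"
definition K_edge :: "nat \<Rightarrow> nat \<Rightarrow> bool" where "K_edge x y \<longleftrightarrow> x \<noteq> y"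

definition chi_lc :: "'v set \<Rightarrow> ('v \<Rightarrow> 'v \<Rightarrow> bool) \<Rightarrow> nat" where
  "chi_lc V E = (LEAST c. lc_algebra_nonzero V E (K_verts c) K_edge)"

end

theory Submission
  imports Defs
begin

lemma mult_mono_left:
  "fa_mult (fa_mono a) q = (\<lambda>u. if take (length a) u = a then q (drop (length a) u) else 0)"
proof (rule ext)
  fix u :: "'a list"
  have "fa_mult (fa_mono a) q u = (\<Sum>i\<le>length u. if i = length a then (if take i u = a then q (drop i u) else 0) else 0)"
    unfolding fa_mult_def fa_mono_def
    by (rule sum.cong) (auto simp: min_def split: if_splits)
  also have "\<dots> = (if length a \<le> length u then (if take (length a) u = a then q (drop (length a) u) else 0) else 0)"
    by (simp add: sum.delta)
  also have "\<dots> = (if take (length a) u = a then q (drop (length a) u) else 0)"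
    by (auto dest: arg_cong[where f=length])
  finally show "fa_mult (fa_mono a) q u = (if take (length a) u = a then q (drop (length a) u) else 0)" .
qed

lemma mult_mono_right:
  "fa_mult p (fa_mono b) = (\<lambda>u. if length b \<le> length u \<and> drop (length u - length b) u = b
      then p (take (length u - length b) u) else 0)"
proof (rule ext)
  fix u :: "'a list"
  have "fa_mult p (fa_mono b) u = (\<Sum>i\<le>length u. if i = length u - length b then (if length b \<le> length u \<and> drop i u = b then p (take i u) else 0) else 0)"
    unfolding fa_mult_def fa_mono_def
    by (rule sum.cong) (auto split: if_splits)
  also have "\<dots> = (if length b \<le> length u \<and> drop (length u - length b) u = b
      then p (take (length u - length b) u) else 0)"
    by (simp add: sum.delta)
  finally show "fa_mult p (fa_mono b) u = (if length b \<le> length u \<and> drop (length u - length b) u = b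
      then p (take (length u - length b) u) else 0)" .
qed

lemma mono_mult: "fa_mult (fa_mono a) (fa_mono b) = fa_mono (a @ b)"
  unfolding mult_mono_left
  by (rule ext) (auto simp: fa_mono_def append_eq_conv_conj, metis append_take_drop_id)

definition sw :: "'g list \<Rightarrow> 'g list \<Rightarrow> 'g fa \<Rightarrow> 'g fa" where
  "sw a b p = fa_mult (fa_mult (fa_mono a) p) (fa_mono b)"

lemma sw_formula: "sw a b p = (\<lambda>u. if length b \<le> length u \<and> drop (length u - length b) u = b then
   (if take (length a) (take (length u - length b) u) = a then p (drop (length a) (take (length u - length b) u)) else 0) else 0)"
  unfolding sw_def mult_mono_right mult_mono_left by (rule refl)

lemma sw_mono: "sw a b (fa_mono w) = fa_mono (a @ w @ b)"
  unfolding sw_def mono_mult by simp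

lemma sw_diff: "sw a b (fa_diff p q) = fa_diff (sw a b p) (sw a b q)"
  unfolding sw_formula fa_diff_def by (rule ext) simp

lemma sw_sum: "sw a b (\<lambda>u. \<Sum>x\<in>A. f x u) = (\<lambda>u. \<Sum>x\<in>A. sw a b (f x) u)"
  unfolding sw_formula by (rule ext) (auto intro: sum.neutral)

lemma gen_mono: "fa_gen g = fa_mono [g]" by (simp add: fa_gen_def)
lemma one_mono: "fa_one = fa_mono []" by (simp add: fa_one_def)
lemma gen_gen: "fa_mult (fa_gen g) (fa_gen h) = fa_mono [g, h]"
  by (simp add: gen_mono mono_mult)

lemma ideal_sw: "r \<in> R \<Longrightarrow> set a \<subseteq> Gens \<Longrightarrow> set b \<subseteq> Gens \<Longrightarrow> sw a b r \<in> fa_ideal Gens R"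
  unfolding sw_def by (rule fa_ideal.gen) auto

lemma ideal_add': "p \<in> fa_ideal Gens R \<Longrightarrow> q \<in> fa_ideal Gens R \<Longrightarrow> (\<And>u. s u = p u + q u) \<Longrightarrow> s \<in> fa_ideal Gens R"
proof -
  assume a: "p \<in> fa_ideal Gens R" "q \<in> fa_ideal Gens R" "\<And>u. s u = p u + q u"
  have e: "s = (\<lambda>u. p u + q u)" by (rule ext) (rule a(3))
  show ?thesis unfolding e by (rule fa_ideal.add[OF a(1) a(2)])
qed

lemma ideal_diff': "p \<in> fa_ideal Gens R \<Longrightarrow> q \<in> fa_ideal Gens R \<Longrightarrow> (\<And>u. s u = p u - q u) \<Longrightarrow> s \<in> fa_ideal Gens R"
proof -
  assume a: "p \<in> fa_ideal Gens R" "q \<in> fa_ideal Gens R" "\<And>u. s u = p u - q u"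
  have m: "(\<lambda>u. (-1) * q u) \<in> fa_ideal Gens R" by (rule fa_ideal.smult[OF a(2)])
  show ?thesis by (rule ideal_add'[OF a(1) m]) (simp add: a(3))
qed

lemma ideal_sum': "finite A \<Longrightarrow> (\<And>x. x \<in> A \<Longrightarrow> f x \<in> fa_ideal Gens R) \<Longrightarrow> (\<lambda>u. \<Sum>x\<in>A. f x u) \<in> fa_ideal Gens R"
proof (induction A rule: finite_induct)
  case empty
  have e: "(\<lambda>u. \<Sum>x\<in>{}. f x u) = (\<lambda>u. 0)" by simp
  show ?case unfolding e by (rule fa_ideal.zero)
next
  case (insert x F)
  have h1: "f x \<in> fa_ideal Gens R" using insert.prems by simp
  have h2: "(\<lambda>u. \<Sum>x\<in>F. f x u) \<in> fa_ideal Gens R" using insert.prems by (intro insert.IH) simp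
  show ?case by (rule ideal_add'[OF h1 h2]) (simp add: insert.hyps)
qed

lemma rel_sum: "v \<in> V \<Longrightarrow> fa_diff (\<lambda>u. \<Sum>x\<in>W. fa_gen (v,x) u) fa_one \<in> lc_relations V E W F"
  unfolding lc_relations_def
  apply (intro UnI1 CollectI)
  apply (rule exI[where x=v])
  apply (intro conjI refl)
  apply assumption
  done

lemma rel_edge: "v \<in> V \<Longrightarrow> w \<in> V \<Longrightarrow> x \<in> W \<Longrightarrow> y \<in> W \<Longrightarrow> E v w \<Longrightarrow> \<not> F x y \<Longrightarrow>
   fa_mult (fa_gen (v,x)) (fa_gen (w,y)) \<in> lc_relations V E W F"
  unfolding lc_relations_def
  apply (rule UnI1)
  apply (rule UnI2)
  apply (rule CollectI)
  apply (rule exI[where x=v], rule exI[where x=w], rule exI[where x=x], rule exI[where x=y])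
  apply (intro conjI refl)
  apply assumption+
  done

lemma rel_comm: "v \<in> V \<Longrightarrow> w \<in> V \<Longrightarrow> x \<in> W \<Longrightarrow> y \<in> W \<Longrightarrow> E v w \<Longrightarrow>
   fa_diff (fa_mult (fa_gen (v,x)) (fa_gen (w,y))) (fa_mult (fa_gen (w,y)) (fa_gen (v,x))) \<in> lc_relations V E W F"
  unfolding lc_relations_def
  apply (rule UnI2)
  apply (rule CollectI)
  apply (rule exI[where x=v], rule exI[where x=w], rule exI[where x=x], rule exI[where x=y])
  apply (intro conjI refl)
  apply assumption+
  done

abbreviation "RR n c \<equiv> lc_relations (K_verts n) K_edge (K_verts c) K_edge"
abbreviation "II n c \<equiv> fa_ideal (K_verts n \<times> K_verts c) (RR n c)"

lemma commute_ideal: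
  assumes "v < n" "x < c" "\<forall>g\<in>set pre. fst g \<noteq> v" "set pre \<subseteq> K_verts n \<times> K_verts c"
    "set a \<subseteq> K_verts n \<times> K_verts c" "set rest \<subseteq> K_verts n \<times> K_verts c"
  shows "fa_diff (fa_mono (a @ (v,x) # pre @ rest)) (fa_mono (a @ pre @ (v,x) # rest)) \<in> II n c"
  using assms(3-5)
proof (induction pre arbitrary: a)
  case Nil
  then show ?case using fa_ideal.zero by (simp add: fa_diff_def)
next
  case (Cons g pre)
  obtain w y where g: "g = (w,y)" by fastforce
  have wv: "w \<noteq> v" "w < n" "y < c" using Cons.prems g by (auto simp: K_verts_def)
  have r: "fa_diff (fa_mult (fa_gen (v,x)) (fa_gen (w,y))) (fa_mult (fa_gen (w,y)) (fa_gen (v,x))) \<in> RR n c"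
    using wv assms(1,2) by (intro rel_comm) (auto simp: K_verts_def K_edge_def)
  have s1: "sw a (pre @ rest) (fa_diff (fa_mult (fa_gen (v,x)) (fa_gen (w,y))) (fa_mult (fa_gen (w,y)) (fa_gen (v,x)))) \<in> II n c"
    by (rule ideal_sw[OF r]) (use Cons.prems assms in auto)
  have s1': "sw a (pre @ rest) (fa_diff (fa_mult (fa_gen (v,x)) (fa_gen (w,y))) (fa_mult (fa_gen (w,y)) (fa_gen (v,x))))
     = fa_diff (fa_mono (a @ (v,x) # g # pre @ rest)) (fa_mono ((a @ [g]) @ (v,x) # pre @ rest))"
    by (simp add: sw_diff gen_gen sw_mono g)
  have ih: "fa_diff (fa_mono ((a @ [g]) @ (v,x) # pre @ rest)) (fa_mono ((a @ [g]) @ pre @ (v,x) # rest)) \<in> II n c"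
    using Cons.prems by (intro Cons.IH) auto
  show ?case
    by (rule ideal_add'[OF s1[unfolded s1'] ih]) (simp add: fa_diff_def)
qed

lemma main_ind:
  assumes "c < n"
  shows "\<forall>u. distinct (map fst u) \<longrightarrow> distinct (map snd u) \<longrightarrow> set u \<subseteq> K_verts n \<times> K_verts c
     \<longrightarrow> length u + m = n \<longrightarrow> fa_mono u \<in> II n c"
proof (induction m)
  case 0
  show ?case
  proof (intro allI impI)
    fix u :: "(nat \<times> nat) list"
    assume h: "distinct (map fst u)" "distinct (map snd u)" "set u \<subseteq> K_verts n \<times> K_verts c" "length u + 0 = n"
    have "card (set (map snd u)) = length u" using h(2) distinct_card by fastforce
    moreover have "set (map snd u) \<subseteq> {0..<c}" using h(3) by (auto simp: K_verts_def)
    hence "card (set (map snd u)) \<le> card {0..<c}" by (intro card_mono) simp_all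
    hence "card (set (map snd u)) \<le> c" by simp
    ultimately show "fa_mono u \<in> II n c" using h(4) assms by simp
  qed
next
  case (Suc m)
  show ?case
  proof (intro allI impI)
    fix u :: "(nat \<times> nat) list"
    assume h: "distinct (map fst u)" "distinct (map snd u)" "set u \<subseteq> K_verts n \<times> K_verts c" "length u + Suc m = n"
    have "\<exists>v\<in>{0..<n}. v \<notin> set (map fst u)"
    proof (rule ccontr)
      assume "\<not> ?thesis"
      hence "{0..<n} \<subseteq> set (map fst u)" by auto
      hence "card {0..<n} \<le> card (set (map fst u))" by (intro card_mono) simp_all
      hence "n \<le> card (set (map fst u))" by simp
      also have "\<dots> = length u" using h(1) distinct_card by fastforce
      finally show False using h(4) by simp
    qed
    then obtain v where v: "v < n" "v \<notin> set (map fst u)" by auto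
    have terms: "fa_mono ((v,x) # u) \<in> II n c" if x: "x \<in> K_verts c" for x
    proof (cases "x \<in> set (map snd u)")
      case False
      have a1: "distinct (map fst ((v,x)#u))" using h(1) v(2) by simp
      have a2: "distinct (map snd ((v,x)#u))" using h(2) False by simp
      have a3: "set ((v,x)#u) \<subseteq> K_verts n \<times> K_verts c" using h(3) v(1) x by (simp add: K_verts_def)
      have a4: "length ((v,x)#u) + m = n" using h(4) by simp
      show ?thesis using Suc.IH a1 a2 a3 a4 by blast
    next
      case True
      then obtain w where "(w,x) \<in> set u" by auto
      then obtain pre post where u: "u = pre @ (w,x) # post" by (meson split_list)
      have wv: "w \<noteq> v" "w < n" using v h(3) u by (auto simp: K_verts_def)
      have xc: "x < c" using x by (simp add: K_verts_def)
      have c1: "fa_diff (fa_mono ([] @ (v,x) # pre @ ((w,x) # post))) (fa_mono ([] @ pre @ (v,x) # ((w,x) # post))) \<in> II n c"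
      proof (rule commute_ideal)
        show "v < n" "x < c" by (fact v(1), fact xc)
        show "\<forall>g\<in>set pre. fst g \<noteq> v" using v(2) unfolding u by force
        show "set pre \<subseteq> K_verts n \<times> K_verts c" using h(3) unfolding u by simp
        show "set [] \<subseteq> K_verts n \<times> K_verts c" by simp
        show "set ((w,x) # post) \<subseteq> K_verts n \<times> K_verts c" using h(3) unfolding u by simp
      qed
      have r: "fa_mult (fa_gen (v,x)) (fa_gen (w,x)) \<in> RR n c"
        using wv v xc by (intro rel_edge) (auto simp: K_verts_def K_edge_def)
      have c2: "sw pre post (fa_mult (fa_gen (v,x)) (fa_gen (w,x))) \<in> II n c"
        by (rule ideal_sw[OF r]) (use h(3) u in auto)
      have c2': "sw pre post (fa_mult (fa_gen (v,x)) (fa_gen (w,x))) = fa_mono (pre @ (v,x) # (w,x) # post)"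
        by (simp add: gen_gen sw_mono)
      show ?thesis
        by (rule ideal_add'[OF c1 c2]) (simp add: fa_diff_def c2' u)
    qed
    have r: "fa_diff (\<lambda>u. \<Sum>x\<in>K_verts c. fa_gen (v, x) u) fa_one \<in> RR n c"
      using v by (intro rel_sum) (auto simp: K_verts_def)
    have s: "sw [] u (fa_diff (\<lambda>u. \<Sum>x\<in>K_verts c. fa_gen (v, x) u) fa_one) \<in> II n c"
      by (rule ideal_sw[OF r]) (use h(3) in auto)
    have s': "sw [] u (fa_diff (\<lambda>u. \<Sum>x\<in>K_verts c. fa_gen (v, x) u) fa_one)
       = fa_diff (\<lambda>w. \<Sum>x\<in>K_verts c. fa_mono ((v,x) # u) w) (fa_mono u)"
      unfolding gen_mono one_mono sw_diff sw_sum[where f="\<lambda>x. fa_mono [(v,x)]"] sw_mono by simp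
    have sm: "(\<lambda>w. \<Sum>x\<in>K_verts c. fa_mono ((v,x) # u) w) \<in> II n c"
      by (rule ideal_sum'[OF _ terms]) (simp_all add: K_verts_def)
    show "fa_mono u \<in> II n c"
      by (rule ideal_diff'[OF sm s[unfolded s']]) (simp add: fa_diff_def)
  qed
qed

lemma zero_below: "c < n \<Longrightarrow> \<not> lc_algebra_nonzero (K_verts n) K_edge (K_verts c) K_edge"
  unfolding lc_algebra_nonzero_def one_mono
proof -
  assume "c < n"
  from main_ind[OF this, of n, rule_format, of "[]"]
  show "\<not> fa_mono [] \<notin> II n c" by simp
qed


lemma sw_app: "sw a b r (a @ w @ b) = r w"
  unfolding sw_formula by simp

lemma sw_zero: assumes "\<not> (\<exists>w. u = a @ w @ b)" shows "sw a b r u = 0"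
proof -
  let ?t = "take (length u - length b) u"
  have "\<not> (length b \<le> length u \<and> drop (length u - length b) u = b \<and> take (length a) ?t = a)"
  proof
    assume h: "length b \<le> length u \<and> drop (length u - length b) u = b \<and> take (length a) ?t = a"
    have "u = ?t @ b" using h by (metis append_take_drop_id)
    also have "?t = a @ drop (length a) ?t" using h by (metis append_take_drop_id)
    finally have "u = a @ drop (length a) ?t @ b" by simp
    then show False using assms by blast
  qed
  then show ?thesis unfolding sw_formula by auto
qed

definition DD :: "nat \<Rightarrow> (nat \<times> nat) set" where "DD n = (\<lambda>v. (v, v)) ` {0..<n}"
definition SS :: "nat \<Rightarrow> nat \<Rightarrow> (nat \<times> nat) list set" where
  "SS n M = {u. set u \<subseteq> DD n \<and> length u \<le> M}"
definition LL :: "nat \<Rightarrow> nat \<Rightarrow> (nat \<times> nat) fa \<Rightarrow> complex" where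
  "LL n M p = (\<Sum>u\<in>SS n M. p u)"

lemma DD_mem: "(a, b) \<in> DD n \<longleftrightarrow> a = b \<and> a < n"
  unfolding DD_def by auto

lemma finite_SS: "finite (SS n M)"
proof -
  have "finite (DD n)" unfolding DD_def by simp
  then show ?thesis unfolding SS_def by (rule finite_lists_length_le)
qed

lemma LL_sw:
  assumes "length a + length b \<le> M"
  shows "LL n M (sw a b r) = (if set a \<subseteq> DD n \<and> set b \<subseteq> DD n then LL n (M - length a - length b) r else 0)"
proof (cases "set a \<subseteq> DD n \<and> set b \<subseteq> DD n")
  case True
  let ?T = "(\<lambda>w. a @ w @ b) ` SS n (M - length a - length b)"
  have sub: "?T \<subseteq> SS n M" using True assms unfolding SS_def by auto
  have z: "\<forall>u\<in>SS n M - ?T. sw a b r u = 0"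
  proof
    fix u assume u: "u \<in> SS n M - ?T"
    show "sw a b r u = 0"
    proof (rule sw_zero, rule notI)
      assume "\<exists>w. u = a @ w @ b"
      then obtain w where w: "u = a @ w @ b" by blast
      have "w \<in> SS n (M - length a - length b)" using u w unfolding SS_def by auto
      then show False using u w by blast
    qed
  qed
  have "LL n M (sw a b r) = (\<Sum>u\<in>?T. sw a b r u)"
    unfolding LL_def by (rule sum.mono_neutral_right[OF finite_SS sub z])
  also have "\<dots> = (\<Sum>w\<in>SS n (M - length a - length b). sw a b r (a @ w @ b))"
    by (subst sum.reindex) (auto simp: inj_on_def)
  also have "\<dots> = LL n (M - length a - length b) r" unfolding LL_def sw_app ..
  finally show ?thesis using True by simp
next
  case False
  have "LL n M (sw a b r) = 0" unfolding LL_def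
  proof (rule sum.neutral, rule ballI)
    fix u assume u: "u \<in> SS n M"
    show "sw a b r u = 0"
    proof (rule sw_zero, rule notI)
      assume "\<exists>w. u = a @ w @ b"
      then obtain w where w: "u = a @ w @ b" by blast
      then show False using u False unfolding SS_def by auto
    qed
  qed
  moreover have "(if set a \<subseteq> DD n \<and> set b \<subseteq> DD n then LL n (M - length a - length b) r else 0) = 0"
    using False by (simp only: if_False)
  ultimately show ?thesis by simp
qed

lemma LL_ideal:
  assumes "p \<in> fa_ideal Gens R" "\<And>r. r \<in> R \<Longrightarrow> \<exists>N. \<forall>M\<ge>N. LL n M r = 0"
  shows "\<exists>N. \<forall>M\<ge>N. LL n M p = 0"
  using assms(1)
proof induction
  case zero
  show ?case unfolding LL_def by simp
next
  case (gen r a b)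
  obtain N where N: "\<forall>M\<ge>N. LL n M r = 0" using assms(2)[OF gen(1)] by blast
  have "\<forall>M\<ge>N + length a + length b. LL n M (sw a b r) = 0"
  proof (intro allI impI)
    fix M assume M: "N + length a + length b \<le> M"
    have "length a + length b \<le> M" using M by simp
    hence "LL n M (sw a b r) = (if set a \<subseteq> DD n \<and> set b \<subseteq> DD n then LL n (M - length a - length b) r else 0)"
      by (rule LL_sw)
    moreover have "LL n (M - length a - length b) r = 0" using N M by simp
    ultimately show "LL n M (sw a b r) = 0" by simp
  qed
  then show ?case unfolding sw_def by blast
next
  case (add p q)
  then obtain N1 N2 where "\<forall>M\<ge>N1. LL n M p = 0" "\<forall>M\<ge>N2. LL n M q = 0" by blast
  then have "\<forall>M\<ge>max N1 N2. LL n M (\<lambda>u. p u + q u) = 0"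
    unfolding LL_def by (simp add: sum.distrib)
  then show ?case by blast
next
  case (smult p c)
  then obtain N where "\<forall>M\<ge>N. LL n M p = 0" by blast
  then have "\<forall>M\<ge>N. LL n M (\<lambda>u. c * p u) = 0"
    unfolding LL_def by (simp add: sum_distrib_left[symmetric])
  then show ?case by blast
qed

lemma LL_mono: "LL n M (fa_mono w) = (if w \<in> SS n M then 1 else 0)"
  unfolding LL_def fa_mono_def by (simp add: finite_SS)

lemma LL_diff: "LL n M (fa_diff p q) = LL n M p - LL n M q"
  unfolding LL_def fa_diff_def by (simp add: sum_subtractf)

lemma LL_sum: "LL n M (\<lambda>u. \<Sum>x\<in>A. f x u) = (\<Sum>x\<in>A. LL n M (f x))"
  unfolding LL_def by (rule sum.swap)

lemma rels_ok:
  assumes "r \<in> RR n n" "2 \<le> M"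
  shows "LL n M r = 0"
  using assms(1) unfolding lc_relations_def
proof (elim UnE CollectE exE conjE)
  fix v assume r: "r = fa_diff (\<lambda>u. \<Sum>x\<in>K_verts n. fa_gen (v, x) u) fa_one" and v: "v \<in> K_verts n"
  have "LL n M r = (\<Sum>x\<in>K_verts n. LL n M (fa_mono [(v,x)])) - LL n M (fa_mono [])"
    unfolding r LL_diff gen_mono one_mono by (subst LL_sum[where f="\<lambda>x. fa_mono [(v,x)]"]) (rule refl)
  also have "\<dots> = (\<Sum>x\<in>{0..<n}. if x = v then 1 else 0) - 1"
    unfolding LL_mono
    using v assms(2) by (intro arg_cong2[where f=minus] sum.cong) (auto simp: SS_def DD_mem K_verts_def)
  also have "\<dots> = 0" using v by (simp add: K_verts_def)
  finally show ?thesis .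
next
  fix v x assume r: "r = fa_diff (fa_mult (fa_gen (v, x)) (fa_gen (v, x))) (fa_gen (v, x))"
  show ?thesis unfolding r LL_diff gen_mono mono_mult LL_mono using assms(2)
    by (simp add: SS_def)
next
  fix v x y assume r: "r = fa_mult (fa_gen (v, x)) (fa_gen (v, y))" and xy: "x \<noteq> y"
  show ?thesis unfolding r gen_gen LL_mono using xy by (auto simp: SS_def DD_mem)
next
  fix v w x y assume r: "r = fa_mult (fa_gen (v, x)) (fa_gen (w, y))" and e: "K_edge v w" "\<not> K_edge x y"
  show ?thesis unfolding r gen_gen LL_mono using e by (auto simp: SS_def DD_mem K_edge_def)
next
  fix v w x y assume r: "r = fa_diff (fa_mult (fa_gen (v, x)) (fa_gen (w, y))) (fa_mult (fa_gen (w, y)) (fa_gen (v, x)))"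
  show ?thesis unfolding r LL_diff gen_gen LL_mono by (simp add: SS_def conj_commute)
qed

lemma nonzero_n: "lc_algebra_nonzero (K_verts n) K_edge (K_verts n) K_edge"
  unfolding lc_algebra_nonzero_def
proof
  assume "fa_one \<in> II n n"
  then obtain N where N: "\<forall>M\<ge>N. LL n M fa_one = 0"
    using LL_ideal[where R="RR n n"] rels_ok by blast
  have "LL n (N + 2) fa_one = 1" unfolding one_mono LL_mono by (simp add: SS_def)
  then show False using N by simp
qed

theorem mainTheorem2:
  fixes n :: nat
  assumes "n \<ge> 1"
  shows "chi_lc (K_verts n) K_edge = n"
  unfolding chi_lc_def
proof (rule Least_equality)
  show "lc_algebra_nonzero (K_verts n) K_edge (K_verts n) K_edge" by (rule nonzero_n)
  fix y assume "lc_algebra_nonzero (K_verts n) K_edge (K_verts y) K_edge"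
  then show "n \<le> y" using zero_below[of y n] by (cases "y < n") auto
qed

end
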